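(* Let $\varphi\in C^\infty_c(\mathbb R)$ satisfy $$\sum_{k=1}^\infty\frac{\|D^k\varphi\|_{L^2(\mathbb R)}^2}{k^2}<+\infty.$$ Then $\varphi\equiv0$. Consequently, with $N=1$, $\sigma_s$ the normalized surface measure on $\mathbb S^0$, and $\mu^+=\sum_{k=1}^\infty\delta_k/k^2$, for every open set $\Omega\subset\mathbb R$ the space $\mathcal X(\Omega)$ equals $\{0\}$.
   Context: $D^k$ is the $k$-th derivative and $\delta_k$ the Dirac mass at $k$. In the setting of the consequence, for $s=k\in\mathbb N$ the energy $\mathcal E_{2s_1,s}(u,u)$ (with $s_1=k+1$) equals $\|D^ku\|^2_{L^2(\mathbb R)}$, so that for this $\mu^+$, $\mathcal X(\Omega)$ is the closure of $\{u\in C^\infty_c(\Omega):\sum_{k\ge1}\|D^ku\|^2_{L^2}/k^2<\infty\}$ in the norm $(\|u\|^2_{L^2}+\sum_{k\ge1}\|D^ku\|^2_{L^2}/k^2)^{1/2}$. *)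

theory Defs
  imports "HOL-Analysis.Analysis"
begin

definition test_fun :: "real set \<Rightarrow> (real \<Rightarrow> real) \<Rightarrow> bool" where
  "test_fun \<Omega> u \<longleftrightarrow>
     (\<forall>k x. (deriv ^^ k) u differentiable (at x)) \<and>
     compact (closure {x. u x \<noteq> 0}) \<and> closure {x. u x \<noteq> 0} \<subseteq> \<Omega>"

definition L2sq :: "(real \<Rightarrow> real) \<Rightarrow> real" where
  "L2sq u = integral\<^sup>L lborel (\<lambda>x. (u x)\<^sup>2)"

definition energy_finite :: "(real \<Rightarrow> real) \<Rightarrow> bool" where
  "energy_finite u \<longleftrightarrow> summable (\<lambda>k. L2sq ((deriv ^^ Suc k) u) / (real (Suc k))\<^sup>2)"

text \<open>The dense subspace whose closure is X(Omega).\<close>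
definition Xpre :: "real set \<Rightarrow> (real \<Rightarrow> real) set" where
  "Xpre \<Omega> = {u. test_fun \<Omega> u \<and> energy_finite u}"

end

theory Submission
  imports Defs
begin
lemma L2sq_interval:
  fixes h :: "real \<Rightarrow> real" and R :: real
  assumes cont: "continuous_on UNIV h" and z: "\<And>x. \<bar>x\<bar> > R \<Longrightarrow> h x = 0"
  shows "((\<lambda>x. (h x)\<^sup>2) has_integral L2sq h) {-R..R}"
proof -
  have ic: "isCont (\<lambda>x. (h x)\<^sup>2) x" for x
    using cont by (intro continuous_intros) (simp add: continuous_on_eq_continuous_at)
  have eq: "(\<lambda>x. (h x)\<^sup>2 * indicator {-R..R} x) = (\<lambda>x. (h x)\<^sup>2)"
  proof (rule ext)
    fix x show "(h x)\<^sup>2 * indicator {-R..R} x = (h x)\<^sup>2"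
      using z[of x] by (cases "x \<in> {-R..R}") (auto simp: abs_if split: if_splits)
  qed
  have "integrable lborel (\<lambda>x. (h x)\<^sup>2)"
    using borel_integrable_atLeastAtMost[of "-R" R "\<lambda>x. (h x)\<^sup>2"] ic eq by simp
  then have "((\<lambda>x. (h x)\<^sup>2) has_integral L2sq h) UNIV"
    unfolding L2sq_def by (rule has_integral_integral_real)
  moreover have "(\<lambda>x. (h x)\<^sup>2) = (\<lambda>x. if x \<in> {-R..R} then (h x)\<^sup>2 else 0)"
    using z by (force simp: fun_eq_iff abs_if)
  ultimately show ?thesis using has_integral_restrict_UNIV[of "{-R..R}" "\<lambda>x. (h x)\<^sup>2"] by simp
qed

lemma sup_bound:
  fixes g g' :: "real \<Rightarrow> real" and R :: real
  assumes R: "R \<ge> 0" and d: "\<And>x. (g has_real_derivative g' x) (at x)"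
    and cont: "continuous_on UNIV g'"
    and zg: "\<And>x. \<bar>x\<bar> > R \<Longrightarrow> g x = 0" and zg': "\<And>x. \<bar>x\<bar> > R \<Longrightarrow> g' x = 0"
  shows "\<bar>g x\<bar> \<le> R + 1 + L2sq g' / 2"
proof -
  have I: "((\<lambda>x. (g' x)\<^sup>2) has_integral L2sq g') {-R..R}"
    by (rule L2sq_interval[OF cont zg'])
  have nn: "L2sq g' \<ge> 0"
    using has_integral_nonneg[OF I] by simp
  show ?thesis
  proof (cases "\<bar>x\<bar> > R")
    case True then show ?thesis using zg nn R by simp
  next
    case False
    then have x: "-R \<le> x" "x \<le> R" by auto
    have "g x = g x - g (-R - 1)" using zg[of "-R-1"] R by simp
    have ftc: "(g' has_integral (g x - g (-R-1))) {-R-1..x}"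
      apply (rule fundamental_theorem_of_calculus)
      using x apply simp
      using d by (metis has_real_derivative_iff_has_vector_derivative has_vector_derivative_at_within)
    have cI: "continuous_on A g'" for A using cont continuous_on_subset by blast
    have cH: "continuous_on A (\<lambda>t. (1 + (g' t)\<^sup>2)/2)" for A
      by (intro continuous_intros cI) auto
    have "\<bar>g x\<bar> = \<bar>integral {-R-1..x} g'\<bar>" using ftc zg[of "-R-1"] R by (simp add: integral_unique)
    also have "\<dots> \<le> integral {-R-1..x} (\<lambda>t. (1 + (g' t)\<^sup>2)/2)"
    proof -
      have "\<bar>g' t\<bar> \<le> (1 + (g' t)\<^sup>2)/2" for t
      proof -
        have "0 \<le> (\<bar>g' t\<bar> - 1)\<^sup>2" by simp
        then show ?thesis by (simp add: power2_eq_square algebra_simps)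
      qed
      then show ?thesis
        using integral_norm_bound_integral[of g' "{-R-1..x}" "\<lambda>t. (1 + (g' t)\<^sup>2)/2"]
          integrable_continuous_interval[OF cI] integrable_continuous_interval[OF cH] by simp
    qed
    also have "\<dots> \<le> integral {-R-1..R+1} (\<lambda>t. (1 + (g' t)\<^sup>2)/2)"
    proof (rule integral_subset_le)
      show "{-R-1..x} \<subseteq> {-R-1..R+1}" using x by auto
      show "\<forall>t\<in>{-R-1..R+1}. 0 \<le> (1 + (g' t)\<^sup>2)/2" by (simp add: add_nonneg_nonneg)
    qed (rule integrable_continuous_interval[OF cH])+
    also have "\<dots> = R + 1 + L2sq g' / 2"
    proof -
      have I2: "((\<lambda>x. (g' x)\<^sup>2) has_integral L2sq g') {-R-1..R+1}"
        using L2sq_interval[OF cont, of "R+1"] zg' by simp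
      have "((\<lambda>t. (1 + (g' t)\<^sup>2)/2) has_integral ((2*R+2 + L2sq g')/2)) {-R-1..R+1}"
        using has_integral_divide[OF has_integral_add[OF has_integral_const_real[of 1 "-R-1" "R+1"] I2], of 2] R
        by simp
      then have "integral {-R-1..R+1} (\<lambda>t. (1 + (g' t)\<^sup>2)/2) = (2*R+2 + L2sq g')/2"
        by (rule integral_unique)
      then show ?thesis by simp
    qed
    finally show ?thesis .
  qed
qed

lemma sq_le_pow2: "(real n + 1)\<^sup>2 \<le> 4 * 2 ^ n"
proof (induction n)
  case 0 then show ?case by simp
next
  case (Suc n)
  show ?case
  proof (cases "n < 2")
    case True then have "n = 0 \<or> n = 1" by auto
    then show ?thesis by (auto simp: power2_eq_square)
  next
    case False
    then have n2: "2 \<le> real n * real n"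
    proof -
      have "2 \<le> real n" using False by simp
      then have "2 * 2 \<le> real n * real n" using mult_mono[of 2 "real n" 2 "real n"] by simp
      then show ?thesis by simp
    qed
  have "(real (Suc n) + 1)\<^sup>2 = (real n + 1)\<^sup>2 + 2 * real n + 3" by (simp add: power2_eq_square algebra_simps)
  also have "\<dots> \<le> 2 * (real n + 1)\<^sup>2" using n2 by (simp add: power2_eq_square algebra_simps)
  also have "\<dots> \<le> 4 * 2 ^ Suc n" using Suc by simp
  finally show ?thesis .
  qed
qed

lemma taylor_term_lim:
  fixes M d :: real assumes "M \<ge> 0" "d \<ge> 0"
  shows "(\<lambda>n. M * (real n + 1)\<^sup>2 * d ^ n / fact n) \<longlonglongrightarrow> 0"
proof (rule Lim_null_comparison)
  have "(\<lambda>n. inverse (fact n) * (2*d) ^ n) \<longlonglongrightarrow> 0"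
    by (rule summable_LIMSEQ_zero[OF summable_exp])
  then show "(\<lambda>n. 4 * M * (inverse (fact n) * (2*d) ^ n)) \<longlonglongrightarrow> 0"
    using tendsto_mult_right_zero by blast
  show "\<forall>\<^sub>F n in sequentially. norm (M * (real n + 1)\<^sup>2 * d ^ n / fact n) \<le> 4 * M * (inverse (fact n) * (2*d) ^ n)"
  proof (rule always_eventually, rule allI)
    fix n
    have "M * (real n + 1)\<^sup>2 * d ^ n \<le> M * (4 * 2^n) * d ^ n"
      using assms sq_le_pow2[of n] by (intro mult_right_mono mult_left_mono) auto
    then have "M * (real n + 1)\<^sup>2 * d ^ n / fact n \<le> M * (4 * 2^n) * d ^ n / fact n"
      by (intro divide_right_mono) auto
    moreover have "M * (4 * 2^n) * d ^ n / fact n = 4 * M * (inverse (fact n) * (2*d) ^ n)"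
      by (simp add: power_mult_distrib field_simps)
    moreover have "0 \<le> M * (real n + 1)\<^sup>2 * d ^ n / fact n" using assms by simp
    ultimately show "norm (M * (real n + 1)\<^sup>2 * d ^ n / fact n) \<le> 4 * M * (inverse (fact n) * (2*d) ^ n)"
      by simp
  qed
qed

lemma main:
  assumes tf: "test_fun UNIV \<phi>" and ef: "energy_finite \<phi>"
  shows "\<phi> = (\<lambda>_. 0)"
proof -
  define D where "D k = (deriv ^^ k) \<phi>" for k
  have D0: "D 0 = \<phi>" by (simp add: D_def)
  have dif: "D k differentiable (at x)" for k x using tf by (simp add: test_fun_def D_def)
  have DS: "D (Suc k) = deriv (D k)" for k by (simp add: D_def)
  have der: "(D k has_real_derivative D (Suc k) x) (at x)" for k x
    using dif[of k x] DS[of k] by (simp add: DERIV_deriv_iff_real_differentiable)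
  have cont: "continuous_on UNIV (D k)" for k
    using der by (meson DERIV_isCont continuous_at_imp_continuous_on)
  have "bounded (closure {x. \<phi> x \<noteq> 0})"
    using tf unfolding test_fun_def by (simp add: compact_imp_bounded)
  then obtain a where a: "\<forall>x\<in>closure {x. \<phi> x \<noteq> 0}. \<bar>x\<bar> \<le> a"
    unfolding bounded_real by blast
  define R where "R = \<bar>a\<bar>"
  have R0: "R \<ge> 0" by (simp add: R_def)
  have zphi: "\<phi> x = 0" if "\<bar>x\<bar> > R" for x
  proof (rule ccontr)
    assume "\<phi> x \<noteq> 0"
    then have "x \<in> {x. \<phi> x \<noteq> 0}" by simp
    then have "x \<in> closure {x. \<phi> x \<noteq> 0}" by (rule subsetD[OF closure_subset])
    then have "\<bar>x\<bar> \<le> a" using a by (rule bspec[rotated])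
    then show False using that unfolding R_def by simp
  qed
  have openS: "open {x::real. R < \<bar>x\<bar>}"
    by (intro open_Collect_less continuous_intros)
  have zD: "\<And>x. \<bar>x\<bar> > R \<Longrightarrow> D k x = 0" for k
  proof (induction k)
    case 0 then show ?case using zphi D0 by simp
  next
    case (Suc k)
    fix x :: real assume x: "\<bar>x\<bar> > R"
    have "(D k has_real_derivative 0) (at x)"
      by (rule has_field_derivative_transform_within_open[of "\<lambda>_. 0" 0 x "{x. R < \<bar>x\<bar>}"])
         (use openS x Suc.IH in auto)
    then show "D (Suc k) x = 0" using der[of k x] DERIV_unique by blast
  qed
  have "summable (\<lambda>k. L2sq (D (Suc k)) / (real (Suc k))\<^sup>2)"
    using ef by (simp add: energy_finite_def D_def)
  then have "Bseq (\<lambda>k. L2sq (D (Suc k)) / (real (Suc k))\<^sup>2)" by (rule summable_imp_Bseq)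
  then obtain B where B: "B > 0" "\<forall>k. norm (L2sq (D (Suc k)) / (real (Suc k))\<^sup>2) \<le> B"
    by (rule BseqE)
  define M where "M = R + 1 + B"
  have M0: "M \<ge> 0" using R0 B by (simp add: M_def)
  have bound: "\<bar>D k x\<bar> \<le> M * (real k + 1)\<^sup>2" for k x
  proof -
    have L: "L2sq (D (Suc k)) \<le> B * (real k + 1)\<^sup>2"
    proof -
      have "norm (L2sq (D (Suc k)) / (real (Suc k))\<^sup>2) \<le> B" using B(2) by blast
      then have "L2sq (D (Suc k)) / (real (Suc k))\<^sup>2 \<le> B" using abs_ge_self[of "L2sq (D (Suc k)) / (real (Suc k))\<^sup>2"] unfolding real_norm_def by linarith
      then have "L2sq (D (Suc k)) / (real k + 1)\<^sup>2 \<le> B" by (simp add: add.commute)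
      moreover have "(real k + 1)\<^sup>2 > 0" by simp
      ultimately show ?thesis by (simp add: divide_le_eq)
    qed
    have "\<bar>D k x\<bar> \<le> R + 1 + L2sq (D (Suc k)) / 2"
      by (rule sup_bound[OF R0 der cont zD zD])
    also have "\<dots> \<le> (R + 1) * (real k + 1)\<^sup>2 + B * (real k + 1)\<^sup>2"
    proof -
      have "1 * 1 \<le> (real k + 1) * (real k + 1)" by (rule mult_mono) auto
      then have "1 \<le> (real k + 1)\<^sup>2" by (simp add: power2_eq_square)
      then have "R + 1 \<le> (R + 1) * (real k + 1)\<^sup>2" using R0
        using mult_left_mono[of 1 "(real k + 1)\<^sup>2" "R+1"] by simp
      moreover have "L2sq (D (Suc k)) / 2 \<le> B * (real k + 1)\<^sup>2" using L B(1)
      proof -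
        have "0 \<le> B * (real k + 1)\<^sup>2" using B(1) by simp
        then show ?thesis using L by linarith
      qed
      ultimately show ?thesis by linarith
    qed
    finally show ?thesis by (simp add: M_def algebra_simps)
  qed
  define c where "c = R + 1"
  have Dc: "D m c = 0" for m using zD R0 by (simp add: c_def)
  show ?thesis
  proof (rule ext)
    fix x
    show "\<phi> x = 0"
    proof (cases "x < c")
      case False then show ?thesis using zphi R0 by (simp add: c_def)
    next
      case True
      have "\<bar>\<phi> x\<bar> \<le> 0"
      proof (rule LIMSEQ_le_const[OF taylor_term_lim[OF M0, of "\<bar>x - c\<bar>"]])
        show "\<exists>N. \<forall>n\<ge>N. \<bar>\<phi> x\<bar> \<le> M * (real n + 1)\<^sup>2 * \<bar>x - c\<bar> ^ n / fact n"
        proof (intro exI allI impI)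
          fix n :: nat assume "1 \<le> n"
          have "\<exists>t. x < t \<and> t < c \<and> \<phi> x = (\<Sum>m<n. (D m c / fact m) * (x - c)^m) + (D n t / fact n) * (x - c)^n"
          proof (rule Taylor_down[where diff=D and b=c])
            show "0 < n" using \<open>1 \<le> n\<close> by simp
            show "D 0 = \<phi>" by (rule D0)
            show "\<forall>m t. m < n \<and> x \<le> t \<and> t \<le> c \<longrightarrow> (D m has_real_derivative D (Suc m) t) (at t)"
              using der by blast
          qed (use True in simp_all)
          then obtain t where t: "\<phi> x = (\<Sum>m<n. (D m c / fact m) * (x - c)^m) + (D n t / fact n) * (x - c)^n"
            by blast
          then have "\<phi> x = (D n t / fact n) * (x - c)^n" by (simp add: Dc)
          then have "\<bar>\<phi> x\<bar> = \<bar>D n t\<bar> * \<bar>x - c\<bar> ^ n / fact n" by (simp add: abs_mult power_abs)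
          also have "\<dots> \<le> M * (real n + 1)\<^sup>2 * \<bar>x - c\<bar> ^ n / fact n"
            by (intro divide_right_mono mult_right_mono bound) auto
          finally show "\<bar>\<phi> x\<bar> \<le> M * (real n + 1)\<^sup>2 * \<bar>x - c\<bar> ^ n / fact n" .
        qed
      qed simp
      then show ?thesis by simp
    qed
  qed
qed

theorem theorem5p3:
  shows "(\<forall>\<phi>. test_fun UNIV \<phi> \<and> energy_finite \<phi> \<longrightarrow> \<phi> = (\<lambda>_. 0))
       \<and> (\<forall>\<Omega>::real set. open \<Omega> \<longrightarrow> Xpre \<Omega> = {\<lambda>_. 0})"
proof (intro conjI allI impI)
  fix \<phi> assume "test_fun UNIV \<phi> \<and> energy_finite \<phi>"
  then show "\<phi> = (\<lambda>_. 0)" using main by blast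
next
  fix \<Omega> :: "real set" assume "open \<Omega>"
  have z: "(deriv ^^ k) (\<lambda>_::real. 0::real) = (\<lambda>_. 0)" for k
    by (induction k) auto
  have "test_fun \<Omega> (\<lambda>_. 0)" by (simp add: test_fun_def z)
  moreover have "energy_finite (\<lambda>_. 0)" by (simp add: energy_finite_def z L2sq_def)
  moreover have "u = (\<lambda>_. 0)" if "u \<in> Xpre \<Omega>" for u
  proof -
    from that have "test_fun \<Omega> u" "energy_finite u" by (simp_all add: Xpre_def)
    then have "test_fun UNIV u" by (simp add: test_fun_def)
    then show ?thesis using main \<open>energy_finite u\<close> by blast
  qed
  ultimately show "Xpre \<Omega> = {\<lambda>_. 0}" unfolding Xpre_def by blast
qed

end
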